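(* Let $1\le k\le n-1$. If $\lambda\in\Gamma^+_k\subset\mathbb R^n$ and $\lambda_i\le0$ for some index $i$, then $$\sum_{j\ne i}\frac{\partial\sigma_k(\lambda)}{\partial\lambda_j}\ \le\ (n-k)\,\frac{\partial\sigma_k(\lambda)}{\partial\lambda_i}.$$
   Context: $\sigma_k(\lambda)=\sum_{i_1<\dots<i_k}\lambda_{i_1}\cdots\lambda_{i_k}$ is the $k$-th elementary symmetric function; $\Gamma^+_k=\{\lambda\in\mathbb R^n:\sigma_j(\lambda)>0,\ 1\le j\le k\}$. *)

theory Defs
  imports "HOL-Analysis.Analysis"
begin

definition sigma :: "nat \<Rightarrow> real ^ 'n \<Rightarrow> real" where
  "sigma k lam = (\<Sum>S \<in> {S :: 'n set. card S = k}. \<Prod>i\<in>S. lam $ i)"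

definition Gamma_plus :: "nat \<Rightarrow> (real ^ 'n) set" where
  "Gamma_plus k = {lam. \<forall>j. 1 \<le> j \<and> j \<le> k \<longrightarrow> sigma j lam > 0}"

definition dsigma :: "nat \<Rightarrow> 'n \<Rightarrow> real ^ 'n \<Rightarrow> real" where
  "dsigma k j lam = deriv (\<lambda>t. sigma k (\<chi> m. if m = j then t else lam $ m)) (lam $ j)"

end

theory Submission
  imports Defs
begin

definition esym :: "nat \<Rightarrow> ('a \<Rightarrow> real) \<Rightarrow> 'a set \<Rightarrow> real" where
  "esym m f T = (\<Sum>S \<in> {S. S \<subseteq> T \<and> card S = m}. prod f S)"

lemma esym_0: "finite T \<Longrightarrow> esym 0 f T = 1"
proof -
  assume "finite T"
  then have "{S. S \<subseteq> T \<and> card S = 0} = {{}}"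
    using finite_subset by fastforce
  then show ?thesis by (simp add: esym_def)
qed

lemma esym_cong: "(\<And>x. x \<in> T \<Longrightarrow> f x = g x) \<Longrightarrow> esym m f T = esym m g T"
  unfolding esym_def by (intro sum.cong refl prod.cong) auto

lemma esym_rec:
  assumes fin: "finite T" and iT: "i \<in> T"
  shows "esym (Suc m) f T = f i * esym m f (T - {i}) + esym (Suc m) f (T - {i})"
proof -
  let ?A = "{S. S \<subseteq> T \<and> card S = Suc m}"
  let ?B = "{S. S \<subseteq> T - {i} \<and> card S = m}"
  let ?C = "{S. S \<subseteq> T - {i} \<and> card S = Suc m}"
  have finA: "finite ?A" using fin by simp
  have split: "?A = {S \<in> ?A. i \<in> S} \<union> ?C" by auto
  have disj: "{S \<in> ?A. i \<in> S} \<inter> ?C = {}" by auto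
  have img: "{S \<in> ?A. i \<in> S} = insert i ` ?B"
  proof
    show "{S \<in> ?A. i \<in> S} \<subseteq> insert i ` ?B"
    proof
      fix S assume S: "S \<in> {S \<in> ?A. i \<in> S}"
      then have "finite S" using fin finite_subset by blast
      then have "S - {i} \<in> ?B" using S by auto
      moreover have "S = insert i (S - {i})" using S by auto
      ultimately show "S \<in> insert i ` ?B" by blast
    qed
    show "insert i ` ?B \<subseteq> {S \<in> ?A. i \<in> S}"
    proof
      fix S assume "S \<in> insert i ` ?B"
      then obtain R where R: "R \<in> ?B" "S = insert i R" by blast
      then have "finite R" using fin finite_subset by blast
      moreover have "i \<notin> R" using R(1) by blast
      ultimately have "card S = Suc m" using R by (simp add: card_insert_disjoint)
      then show "S \<in> {S \<in> ?A. i \<in> S}" using R iT by blast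
    qed
  qed
  have inj: "inj_on (insert i) ?B" unfolding inj_on_def by auto
  have "esym (Suc m) f T = sum (prod f) {S \<in> ?A. i \<in> S} + sum (prod f) ?C"
    unfolding esym_def
    by (subst split, rule sum.union_disjoint) (use fin disj in auto)
  also have "sum (prod f) {S \<in> ?A. i \<in> S} = sum (prod f \<circ> insert i) ?B"
    unfolding img by (rule sum.reindex[OF inj])
  also have "\<dots> = sum (\<lambda>R. f i * prod f R) ?B"
  proof (rule sum.cong[OF refl])
    fix R assume R: "R \<in> ?B"
    then have "finite R" using fin finite_subset by blast
    moreover have "i \<notin> R" using R by blast
    ultimately show "(prod f \<circ> insert i) R = f i * prod f R" by simp
  qed
  finally show ?thesis unfolding esym_def by (simp add: sum_distrib_left)
qed

lemma sigma_esym: "sigma k lam = esym k (\<lambda>m. lam $ m) UNIV"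
  unfolding sigma_def esym_def by simp

lemma esym_sum:
  "(\<Sum>j\<in>(UNIV::'a::finite set). esym m f (UNIV - {j})) = real (CARD('a) - m) * esym m f UNIV"
proof -
  let ?P = "{S::'a set. S \<subseteq> UNIV \<and> card S = m}"
  have "(\<Sum>j\<in>(UNIV::'a set). esym m f (UNIV - {j}))
      = (\<Sum>j\<in>(UNIV::'a set). \<Sum>S\<in>?P. if j \<notin> S then prod f S else 0)"
  proof (rule sum.cong[OF refl])
    fix j :: 'a
    have e: "{S. S \<subseteq> UNIV - {j} \<and> card S = m} = {S \<in> ?P. j \<notin> S}" by auto
    have fin: "finite ?P" by (rule finite_subset[OF subset_UNIV finite_class.finite_UNIV])
    have "(\<Sum>S\<in>?P. if j \<notin> S then prod f S else 0) = sum (prod f) {S \<in> ?P. j \<notin> S}"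
      by (rule sum.inter_filter[OF fin, symmetric])
    then show "esym m f (UNIV - {j}) = (\<Sum>S\<in>?P. if j \<notin> S then prod f S else 0)"
      unfolding esym_def e by (rule sym)
  qed
  also have "\<dots> = (\<Sum>S\<in>?P. \<Sum>j\<in>(UNIV::'a set). if j \<notin> S then prod f S else 0)"
    by (rule sum.swap)
  also have "\<dots> = (\<Sum>S\<in>?P. real (CARD('a) - m) * prod f S)"
  proof (rule sum.cong[OF refl])
    fix S assume S: "S \<in> ?P"
    have "(\<Sum>j\<in>(UNIV::'a set). if j \<notin> S then prod f S else 0) = (\<Sum>j\<in>UNIV - S. prod f S)"
      by (simp add: sum.If_cases Compl_eq_Diff_UNIV[symmetric] Compl_eq)
    also have "\<dots> = real (card (UNIV - S)) * prod f S" by simp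
    also have "card (UNIV - S) = CARD('a) - m" using S by (simp add: card_Diff_subset)
    finally show "(\<Sum>j\<in>(UNIV::'a set). if j \<notin> S then prod f S else 0) = real (CARD('a) - m) * prod f S" .
  qed
  finally show ?thesis unfolding esym_def by (simp add: sum_distrib_left)
qed

lemma dsigma_esym:
  assumes "k = Suc m"
  shows "dsigma k j lam = esym m (\<lambda>x. lam $ x) (UNIV - {j})"
proof -
  let ?A = "esym m (\<lambda>x. lam $ x) (UNIV - {j})"
  let ?B = "esym k (\<lambda>x. lam $ x) (UNIV - {j})"
  have eq: "(\<lambda>t. sigma k (\<chi> x. if x = j then t else lam $ x)) = (\<lambda>t. t * ?A + ?B)"
  proof
    fix t
    let ?g = "(\<chi> x. if x = j then t else lam $ x)"
    have "sigma k ?g = ?g $ j * esym m (\<lambda>x. ?g $ x) (UNIV - {j}) + esym k (\<lambda>x. ?g $ x) (UNIV - {j})"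
      unfolding sigma_esym assms by (rule esym_rec) auto
    also have "esym m (\<lambda>x. ?g $ x) (UNIV - {j}) = ?A" by (rule esym_cong) auto
    also have "esym k (\<lambda>x. ?g $ x) (UNIV - {j}) = ?B" unfolding assms by (rule esym_cong) auto
    finally show "sigma k ?g = t * ?A + ?B" by simp
  qed
  have "((\<lambda>t. t * ?A + ?B) has_field_derivative ?A) (at (lam $ j))"
    by (auto intro!: derivative_eq_intros)
  then show ?thesis unfolding dsigma_def eq by (rule DERIV_imp_deriv)
qed

theorem mainTheorem4:
  fixes lam :: "real ^ 'n" and k :: nat and i :: 'n
  assumes "1 \<le> k" and "k \<le> CARD('n) - 1"
    and "lam \<in> Gamma_plus k"
    and "lam $ i \<le> 0"
  shows "(\<Sum>j \<in> UNIV - {i}. dsigma k j lam) \<le> real (CARD('n) - k) * dsigma k i lam"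
proof -
  let ?L = "\<lambda>x. lam $ x"
  obtain m where km: "k = Suc m" using assms(1) by (cases k) auto
  have pos: "p \<le> k \<Longrightarrow> esym p ?L (UNIV - {i}) > 0" for p
  proof (induction p)
    case 0 then show ?case by (simp add: esym_0)
  next
    case (Suc q)
    have r: "esym (Suc q) ?L UNIV = lam $ i * esym q ?L (UNIV - {i}) + esym (Suc q) ?L (UNIV - {i})"
      by (rule esym_rec) auto
    have "sigma (Suc q) lam > 0" using assms(3) Suc.prems unfolding Gamma_plus_def by auto
    then have "esym (Suc q) ?L UNIV > 0" by (simp add: sigma_esym)
    moreover have "lam $ i * esym q ?L (UNIV - {i}) \<le> 0"
      using Suc.IH Suc.prems assms(4) by (simp add: mult_nonpos_nonneg less_imp_le)
    ultimately show ?case using r by linarith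
  qed
  let ?D = "\<lambda>j. esym m ?L (UNIV - {j})"
  have key: "esym m ?L UNIV \<le> ?D i"
  proof (cases m)
    case 0 then show ?thesis by (simp add: esym_0)
  next
    case (Suc p)
    have r: "esym (Suc p) ?L UNIV = lam $ i * esym p ?L (UNIV - {i}) + esym (Suc p) ?L (UNIV - {i})"
      by (rule esym_rec) auto
    have "esym p ?L (UNIV - {i}) > 0" using pos[of p] km Suc by simp
    then have "lam $ i * esym p ?L (UNIV - {i}) \<le> 0"
      using assms(4) by (simp add: mult_nonpos_nonneg less_imp_le)
    then show ?thesis using r Suc by simp
  qed
  have ds: "dsigma k j lam = ?D j" for j using dsigma_esym[OF km] .
  have "(\<Sum>j \<in> UNIV - {i}. dsigma k j lam) = (\<Sum>j \<in> UNIV. ?D j) - ?D i"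
    by (simp add: ds sum_diff1)
  also have "\<dots> = real (CARD('n) - m) * esym m ?L UNIV - ?D i" by (simp add: esym_sum)
  also have "\<dots> \<le> real (CARD('n) - m) * ?D i - ?D i"
    using key by (simp add: mult_left_mono)
  also have "\<dots> = real (CARD('n) - k) * ?D i"
  proof -
    have "real (CARD('n) - m) = real (CARD('n) - k) + 1" using km assms(2) by simp
    then show ?thesis by (simp add: algebra_simps)
  qed
  finally show ?thesis by (simp add: ds)
qed

end
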